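(* Let $G=\mathrm{GL}_n$ or $\mathrm{GSp}_{2n}$ and let $M\supset A$ be the Levi subgroup of a standard parabolic subgroup. Let $\nu\in X_{M,\mathbf Q}\cap X_*(A)_{\mathbf Q,\mathrm{dom}}$ be such that its image under $\kappa_M\otimes\mathbf Q$ lies in $\pi_1(M)$. Let $\tilde\nu\in X_*(A)$ be the unique $M$-dominant $M$-minuscule element with $\kappa_M(\tilde\nu)=\kappa_M(\nu)$, and let $[\tilde\nu]$ be the unique $G$-dominant element of $W\tilde\nu$. Then for every $\mu\in X_*(A)_{\mathrm{dom}}$ with $\nu\le\mu$ we have $\nu\le[\tilde\nu]\le\mu$.
   Context: $G=\mathrm{GL}_n$ or $\mathrm{GSp}_{2n}$ over a $p$-adic field, with diagonal maximal split torus $A$, standard Borel $B\supset A$, Weyl group $W$; $X_*(A)$ the cocharacter group ($\mathbf Z^n$, resp. $\{\mu\in\mathbf Z^{2n}:\mu_i+\mu_{2n+1-i}$ constant$\}$). Dominant means $B$-dominant (non-increasing entries); $X_*(A)_{\mathrm{dom}}$, $X_*(A)_{\mathbf Q,\mathrm{dom}}$ denote dominant elements of $X_*(A)$, $X_*(A)\otimes\mathbf Q$. $\nu\le\mu$ means $\mu-\nu$ is a non-negative linear combination of positive coroots. Standard Levi subgroups: block diagonal $M_{(m_1,\dots,m_r)}$ for $\mathrm{GL}_n$, intersection of $\mathrm{GSp}_{2n}$ with $M_{(m_1,\dots,m_r,2j,m_r,\dots,m_1)}$ for $\mathrm{GSp}_{2n}$. $A_M$ is the maximal split torus in the center of $M$,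 $X_M=X_*(A_M)\subset X_*(A)$, $X_{M,\mathbf Q}=X_M\otimes\mathbf Q$. $\pi_1(M)=X_*(A)/(\text{coroot lattice of }M)$ (a free abelian group), $\kappa_M:X_*(A)\to\pi_1(M)$ the projection. An element is $M$-dominant if dominant for $B\cap M$, and $M$-minuscule if $\langle\tilde\nu,\alpha\rangle\in\{0,\pm1\}$ for all roots $\alpha$ of $M$; the $M$-dominant $M$-minuscule elements map bijectively onto $\pi_1(M)$. *)

theory Defs
  imports Complex_Main
begin

text \<open>Cocharacters of the diagonal torus are
  modelled as functions nat => rat, of which only the coordinates 0,...,N-1 matter
  (N = n for GL n and N = 2n for GSp 2n); indices are 0-based, so the coordinate
  1-based i+1 corresponds to index i and i |-> N-1-i is the symplectic involution.\<close>

datatype grp = GL nat | GSp nat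

fun rk :: "grp \<Rightarrow> nat" where
  "rk (GL n) = n"
| "rk (GSp n) = n"

fun dimN :: "grp \<Rightarrow> nat" where
  "dimN (GL n) = n"
| "dimN (GSp n) = 2 * n"

fun is_GSp :: "grp \<Rightarrow> bool" where
  "is_GSp (GL n) = False"
| "is_GSp (GSp n) = True"

definition valid_grp :: "grp \<Rightarrow> bool" where
  "valid_grp G \<longleftrightarrow> 0 < rk G"

definition inXQ :: "grp \<Rightarrow> (nat \<Rightarrow> rat) \<Rightarrow> bool" where
  "inXQ G x \<longleftrightarrow> (is_GSp G \<longrightarrow>
      (\<forall>i<dimN G. x i + x (dimN G - 1 - i) = x 0 + x (dimN G - 1)))"

definition inX :: "grp \<Rightarrow> (nat \<Rightarrow> rat) \<Rightarrow> bool" where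
  "inX G x \<longleftrightarrow> inXQ G x \<and> (\<forall>i<dimN G. x i \<in> \<int>)"

definition dominant :: "grp \<Rightarrow> (nat \<Rightarrow> rat) \<Rightarrow> bool" where
  "dominant G x \<longleftrightarrow> (\<forall>i j. i < j \<and> j < dimN G \<longrightarrow> x j \<le> x i)"

definition ev :: "nat \<Rightarrow> nat \<Rightarrow> rat" where
  "ev i k = (if k = i then 1 else 0)"

text \<open>Roots are the characters x |-> x_i - x_j (i \<noteq> j, i,j < N), restricted to X_*(A).
  The coroot attached to the root x_i - x_j:\<close>
definition coroot :: "grp \<Rightarrow> nat \<Rightarrow> nat \<Rightarrow> nat \<Rightarrow> rat" where
  "coroot G i j k =
     (if \<not> is_GSp G \<or> j = dimN G - 1 - i then ev i k - ev j k
      else ev i k - ev j k + ev (dimN G - 1 - j) k - ev (dimN G - 1 - i) k)"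

definition coroot_le :: "grp \<Rightarrow> (nat \<Rightarrow> rat) \<Rightarrow> (nat \<Rightarrow> rat) \<Rightarrow> bool" where
  "coroot_le G nu mu \<longleftrightarrow> (\<exists>c :: nat \<Rightarrow> nat \<Rightarrow> rat. (\<forall>i j. 0 \<le> c i j) \<and>
     (\<forall>k<dimN G. mu k - nu k =
        (\<Sum>i<dimN G. \<Sum>j<dimN G. if i < j then c i j * coroot G i j k else 0)))"

definition weyl :: "grp \<Rightarrow> (nat \<Rightarrow> nat) set" where
  "weyl G = {s. bij_betw s {..<dimN G} {..<dimN G} \<and>
     (is_GSp G \<longrightarrow> (\<forall>i<dimN G. s (dimN G - 1 - i) = dimN G - 1 - s i))}"

definition in_W_orbit :: "grp \<Rightarrow> (nat \<Rightarrow> rat) \<Rightarrow> (nat \<Rightarrow> rat) \<Rightarrow> bool" where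
  "in_W_orbit G y x \<longleftrightarrow> (\<exists>s\<in>weyl G. \<forall>k<dimN G. y k = x (s k))"

text \<open>Standard Levi subgroups: block compositions (m_1,...,m_r) of N (positive parts),
  palindromic in the GSp case.\<close>
definition std_levi :: "grp \<Rightarrow> nat list \<Rightarrow> bool" where
  "std_levi G ms \<longleftrightarrow> (\<forall>m\<in>set ms. 0 < m) \<and> sum_list ms = dimN G \<and>
     (is_GSp G \<longrightarrow> rev ms = ms)"

definition same_block :: "nat list \<Rightarrow> nat \<Rightarrow> nat \<Rightarrow> bool" where
  "same_block ms i j \<longleftrightarrow> (\<exists>k<length ms.
     sum_list (take k ms) \<le> i \<and> i < sum_list (take (Suc k) ms) \<and>
     sum_list (take k ms) \<le> j \<and> j < sum_list (take (Suc k) ms))"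

definition root_of_M :: "grp \<Rightarrow> nat list \<Rightarrow> nat \<Rightarrow> nat \<Rightarrow> bool" where
  "root_of_M G ms i j \<longleftrightarrow> i < dimN G \<and> j < dimN G \<and> i \<noteq> j \<and> same_block ms i j"

definition inXMQ :: "grp \<Rightarrow> nat list \<Rightarrow> (nat \<Rightarrow> rat) \<Rightarrow> bool" where
  "inXMQ G ms x \<longleftrightarrow> inXQ G x \<and> (\<forall>i j. root_of_M G ms i j \<longrightarrow> x i - x j = 0)"

text \<open>Q-span of the coroots of M = kernel of kappa_M \<otimes> Q.\<close>
definition in_coroot_span_M :: "grp \<Rightarrow> nat list \<Rightarrow> (nat \<Rightarrow> rat) \<Rightarrow> bool" where
  "in_coroot_span_M G ms x \<longleftrightarrow> (\<exists>c :: nat \<Rightarrow> nat \<Rightarrow> rat.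
     \<forall>k<dimN G. x k =
        (\<Sum>i<dimN G. \<Sum>j<dimN G. if root_of_M G ms i j then c i j * coroot G i j k else 0))"

definition kappa_eq :: "grp \<Rightarrow> nat list \<Rightarrow> (nat \<Rightarrow> rat) \<Rightarrow> (nat \<Rightarrow> rat) \<Rightarrow> bool" where
  "kappa_eq G ms x y \<longleftrightarrow> in_coroot_span_M G ms (\<lambda>k. x k - y k)"

text \<open>(kappa_M \<otimes> Q)(nu) lies in pi_1(M) (= image of X_*(A)).\<close>
definition kappa_integral :: "grp \<Rightarrow> nat list \<Rightarrow> (nat \<Rightarrow> rat) \<Rightarrow> bool" where
  "kappa_integral G ms nu \<longleftrightarrow> (\<exists>x. inX G x \<and> kappa_eq G ms nu x)"

definition M_dominant :: "grp \<Rightarrow> nat list \<Rightarrow> (nat \<Rightarrow> rat) \<Rightarrow> bool" where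
  "M_dominant G ms x \<longleftrightarrow> (\<forall>i j. root_of_M G ms i j \<and> i < j \<longrightarrow> 0 \<le> x i - x j)"

definition M_minuscule :: "grp \<Rightarrow> nat list \<Rightarrow> (nat \<Rightarrow> rat) \<Rightarrow> bool" where
  "M_minuscule G ms x \<longleftrightarrow> (\<forall>i j. root_of_M G ms i j \<longrightarrow> x i - x j \<in> {-1, 0, 1})"

end

theory Submission
  imports Defs
begin


definition psum :: "nat \<Rightarrow> (nat \<Rightarrow> rat) \<Rightarrow> rat" where
  "psum p x = (\<Sum>i<p. x i)"
definition Fa :: "nat \<Rightarrow> rat \<Rightarrow> (nat \<Rightarrow> rat) \<Rightarrow> rat" where
  "Fa N a x = (\<Sum>i<N. max (x i - a) 0)"

lemma L1: assumes "p \<le> N" shows "psum p x \<le> of_nat p * a + Fa N a x"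
proof -
  have "psum p x = (\<Sum>i<p. a + (x i - a))" unfolding psum_def by simp
  also have "\<dots> = of_nat p * a + (\<Sum>i<p. x i - a)" by (simp only: sum.distrib) simp
  also have "(\<Sum>i<p. x i - a) \<le> (\<Sum>i<p. max (x i - a) 0)" by (intro sum_mono) simp
  also have "\<dots> \<le> Fa N a x" unfolding Fa_def
    by (rule sum_mono2) (use assms in auto)
  finally show ?thesis by simp
qed

lemma L2: assumes "q \<le> N" "\<And>i. i < q \<Longrightarrow> a \<le> x i" "\<And>i. q \<le> i \<Longrightarrow> i < N \<Longrightarrow> x i \<le> a"
  shows "Fa N a x = psum q x - of_nat q * a"
proof -
  have "Fa N a x = (\<Sum>i\<in>{0..<q}. max (x i - a) 0) + (\<Sum>i\<in>{q..<N}. max (x i - a) 0)"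
    unfolding Fa_def using assms(1) by (simp add: sum.atLeastLessThan_concat lessThan_atLeast0)
  also have "(\<Sum>i\<in>{0..<q}. max (x i - a) 0) = (\<Sum>i\<in>{0..<q}. x i - a)"
    by (rule sum.cong) (use assms(2) in auto)
  also have "(\<Sum>i\<in>{q..<N}. max (x i - a) 0) = 0"
    by (rule sum.neutral) (use assms(3) in auto)
  finally show ?thesis unfolding psum_def by (simp add: sum_subtractf lessThan_atLeast0)
qed

lemma L2d: assumes "\<forall>i j. i < j \<and> j < N \<longrightarrow> x j \<le> x i"
  shows "\<exists>q\<le>N. Fa N a x = psum q x - of_nat q * a"
proof (cases "\<exists>i. i < N \<and> x i \<le> a")
  case True
  define q where "q = (LEAST i. i < N \<and> x i \<le> a)"
  have q: "q < N \<and> x q \<le> a" unfolding q_def using True by (metis (mono_tags, lifting) LeastI)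
  have lt: "a \<le> x i" if "i < q" for i
    using not_less_Least[of i "\<lambda>i. i < N \<and> x i \<le> a"] that q unfolding q_def[symmetric] by auto
  have ge: "x i \<le> a" if "q \<le> i" "i < N" for i
  proof (cases "q = i")
    case True then show ?thesis using q by simp
  next
    case False then show ?thesis using assms q that by (meson le_less order_trans)
  qed
  show ?thesis using L2[of q N a x] q lt ge by (intro exI[of _ q]) auto
next
  case False
  show ?thesis using L2[of N N a x] False by (intro exI[of _ N]) force
qed

lemma L2p: assumes "\<forall>i j. i < j \<and> j < N \<longrightarrow> x j \<le> x i" "0 < p" "p \<le> N"
  shows "Fa N (x (p - 1)) x = psum p x - of_nat p * x (p - 1)"
proof (rule L2)
  fix i assume "i < p" then show "x (p - 1) \<le> x i" using assms
    by (metis One_nat_def Suc_pred le_less less_Suc_eq order_less_le_trans)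
next
  fix i assume "p \<le> i" "i < N" then show "x i \<le> x (p - 1)" using assms by auto
qed (use assms in auto)

lemma pos_sum: assumes "finite B"
  shows "max (\<Sum>i\<in>B. y i) 0 \<le> (\<Sum>i\<in>B. max (y i) (0::rat))"
proof -
  have "(\<Sum>i\<in>B. y i) \<le> (\<Sum>i\<in>B. max (y i) 0)" by (intro sum_mono) simp
  moreover have "0 \<le> (\<Sum>i\<in>B. max (y i) (0::rat))" by (intro sum_nonneg) simp
  ultimately show ?thesis by simp
qed

lemma pos_sum_eq: assumes "(\<forall>i\<in>B. 0 \<le> y i) \<or> (\<forall>i\<in>B. y i \<le> (0::rat))"
  shows "max (\<Sum>i\<in>B. y i) 0 = (\<Sum>i\<in>B. max (y i) (0::rat))"
  using assms
proof
  assume h: "\<forall>i\<in>B. 0 \<le> y i"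
  then have "(\<Sum>i\<in>B. max (y i) 0) = (\<Sum>i\<in>B. y i)" by (intro sum.cong) auto
  moreover have "0 \<le> (\<Sum>i\<in>B. y i)" using h by (intro sum_nonneg) auto
  ultimately show ?thesis by simp
next
  assume h: "\<forall>i\<in>B. y i \<le> 0"
  then have "(\<Sum>i\<in>B. max (y i) 0) = 0" by (intro sum.neutral) auto
  moreover have "(\<Sum>i\<in>B. y i) \<le> 0" using h by (intro sum_nonpos) auto
  ultimately show ?thesis by simp
qed

lemma ints_step: assumes "(x::rat) \<in> \<int>" "y \<in> \<int>" "x < y" shows "x + 1 \<le> y"
proof -
  obtain m where m: "x = of_int m" using assms(1) Ints_cases by blast
  obtain n where n: "y = of_int n" using assms(2) Ints_cases by blast
  have "m < n" using assms(3) m n by simp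
  then have "m + 1 \<le> n" by simp
  then show ?thesis using m n by (metis of_int_add of_int_le_iff of_int_1)
qed

lemma sum_ev: "(\<Sum>k\<in>A. ev t k) = (if finite A \<and> t \<in> A then 1 else 0)"
  unfolding ev_def by (cases "finite A") auto

lemma sum_ev_lt: "(\<Sum>k<p. ev t k) = (if t < p then 1 else 0)"
  by (simp add: sum_ev)

lemma cr_sum: "(\<Sum>k\<in>A. coroot G i j k) =
   (if \<not> is_GSp G \<or> j = dimN G - 1 - i then (\<Sum>k\<in>A. ev i k) - (\<Sum>k\<in>A. ev j k)
    else (\<Sum>k\<in>A. ev i k) - (\<Sum>k\<in>A. ev j k) + (\<Sum>k\<in>A. ev (dimN G - 1 - j) k) - (\<Sum>k\<in>A. ev (dimN G - 1 - i) k))"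
  unfolding coroot_def by (simp add: sum.distrib sum_subtractf)

lemma cr_total: "i < dimN G \<Longrightarrow> j < dimN G \<Longrightarrow> (\<Sum>k<dimN G. coroot G i j k) = 0"
  unfolding cr_sum by (cases G) (simp_all add: sum_ev)

lemma cr_prefix: "i < j \<Longrightarrow> j < dimN G \<Longrightarrow> 0 \<le> (\<Sum>k<p. coroot G i j k)"
  unfolding cr_sum sum_ev_lt by (cases G) (auto simp del: One_nat_def)

lemma ev_flip: "t < N \<Longrightarrow> k < N \<Longrightarrow> ev t (N - 1 - k) = ev (N - 1 - t) k"
  unfolding ev_def by auto

lemma cr_anti: assumes "is_GSp G" "i < dimN G" "j < dimN G" "k < dimN G"
  shows "coroot G i j (dimN G - 1 - k) = - coroot G i j k"
proof -
  have e: "ev t (dimN G - 1 - k) = ev (dimN G - 1 - t) k" if "t < dimN G" for t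
    using ev_flip that assms(4) by blast
  have f: "dimN G - 1 - (dimN G - 1 - t) = t" if "t < dimN G" for t using that by simp
  have ij: "dimN G - 1 - i < dimN G" "dimN G - 1 - j < dimN G" using assms by auto
  show ?thesis unfolding coroot_def
    apply (simp only: e[OF assms(2)] e[OF assms(3)] e[OF ij(1)] e[OF ij(2)] f[OF assms(2)] f[OF assms(3)])
    using assms(1) f[OF assms(2)] by (cases "j = dimN G - 1 - i") (simp_all del: One_nat_def)
qed
lemma swap3: "(\<Sum>k\<in>K. \<Sum>i\<in>I. \<Sum>j\<in>J. f k i j) = (\<Sum>i\<in>I. \<Sum>j\<in>J. \<Sum>k\<in>K. f k i j)"
proof -
  have "(\<Sum>k\<in>K. \<Sum>i\<in>I. \<Sum>j\<in>J. f k i j) = (\<Sum>i\<in>I. \<Sum>k\<in>K. \<Sum>j\<in>J. f k i j)"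
    by (rule sum.swap)
  also have "\<dots> = (\<Sum>i\<in>I. \<Sum>j\<in>J. \<Sum>k\<in>K. f k i j)"
    by (rule sum.cong[OF refl], rule sum.swap)
  finally show ?thesis .
qed

lemma coroot_le_prefix: assumes "coroot_le G x y" "p \<le> dimN G"
  shows "psum p x \<le> psum p y"
proof -
  obtain c where c: "\<forall>i j. 0 \<le> c i j" "\<forall>k<dimN G. y k - x k =
        (\<Sum>i<dimN G. \<Sum>j<dimN G. if i < j then c i j * coroot G i j k else 0)"
    using assms(1) unfolding coroot_le_def by blast
  have "psum p y - psum p x = (\<Sum>k<p. y k - x k)" unfolding psum_def by (simp add: sum_subtractf)
  also have "\<dots> = (\<Sum>k<p. \<Sum>i<dimN G. \<Sum>j<dimN G. if i < j then c i j * coroot G i j k else 0)"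
    by (rule sum.cong) (use c assms(2) in auto)
  also have "\<dots> = (\<Sum>i<dimN G. \<Sum>j<dimN G. \<Sum>k<p. if i < j then c i j * coroot G i j k else 0)"
    by (rule swap3)
  also have "\<dots> = (\<Sum>i<dimN G. \<Sum>j<dimN G. if i < j then c i j * (\<Sum>k<p. coroot G i j k) else 0)"
    by (intro sum.cong refl, rename_tac i j, case_tac "i < j") (simp_all add: sum_distrib_left)
  also have "\<dots> \<ge> 0"
    by (intro sum_nonneg) (use c cr_prefix in auto)
  finally show ?thesis by simp
qed

lemma coroot_le_total: assumes "coroot_le G x y"
  shows "psum (dimN G) x = psum (dimN G) y"
proof -
  obtain c where c: "\<forall>i j. 0 \<le> c i j" "\<forall>k<dimN G. y k - x k =
        (\<Sum>i<dimN G. \<Sum>j<dimN G. if i < j then c i j * coroot G i j k else 0)"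
    using assms(1) unfolding coroot_le_def by blast
  have "psum (dimN G) y - psum (dimN G) x = (\<Sum>k<dimN G. y k - x k)" unfolding psum_def by (simp add: sum_subtractf)
  also have "\<dots> = (\<Sum>k<dimN G. \<Sum>i<dimN G. \<Sum>j<dimN G. if i < j then c i j * coroot G i j k else 0)"
    by (rule sum.cong) (use c in auto)
  also have "\<dots> = (\<Sum>i<dimN G. \<Sum>j<dimN G. \<Sum>k<dimN G. if i < j then c i j * coroot G i j k else 0)"
    by (rule swap3)
  also have "\<dots> = (\<Sum>i<dimN G. \<Sum>j<dimN G. if i < j then c i j * (\<Sum>k<dimN G. coroot G i j k) else 0)"
    by (intro sum.cong refl, rename_tac i j, case_tac "i < j") (simp_all add: sum_distrib_left)
  also have "\<dots> = 0"
    by (intro sum.neutral ballI) (simp add: cr_total)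
  finally show ?thesis by simp
qed



lemma tele: assumes "k < m" "D 0 = 0"
  shows "(\<Sum>i<m. D (Suc i) * (ev i k - ev (Suc i) k)) = D (Suc k) - D k"
proof -
  have a: "(\<Sum>i<m. D (Suc i) * ev i k) = D (Suc k)"
    unfolding ev_def using assms(1) by (simp add: if_distrib cong: if_cong)
  have b: "(\<Sum>i<m. D (Suc i) * ev (Suc i) k) = D k"
  proof (cases k)
    case 0 then show ?thesis using assms unfolding ev_def by simp
  next
    case (Suc k') then show ?thesis using assms(1) unfolding ev_def
      by (simp add: if_distrib cong: if_cong)
  qed
  show ?thesis using a b by (simp add: right_diff_distrib sum_subtractf)
qed

lemma psum_Suc: "psum (Suc k) x = psum k x + x k" unfolding psum_def by simp

lemma inner_sum: assumes "i < N"
  shows "(\<Sum>j<N. if i < j then (if j = Suc i \<and> P i then E i else 0) * cr j else (0::rat))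
       = (if Suc i < N \<and> P i then E i * cr (Suc i) else 0)"
proof -
  have "(\<Sum>j<N. if i < j then (if j = Suc i \<and> P i then E i else 0) * cr j else (0::rat))
      = (\<Sum>j<N. if j = Suc i then (if P i then E i * cr j else 0) else 0)"
    by (rule sum.cong) auto
  also have "\<dots> = (if Suc i < N \<and> P i then E i * cr (Suc i) else 0)"
    by (subst sum.delta) auto
  finally show ?thesis .
qed

lemma sym_sum: assumes "\<forall>i<N. x i + x (N - 1 - i) = C"
  shows "2 * psum N x = of_nat N * C"
proof -
  have "psum N x = (\<Sum>i<N. x (N - 1 - i))"
    unfolding psum_def using sum.nat_diff_reindex[of x N] by simp
  then have "2 * psum N x = (\<Sum>i<N. x i + x (N - 1 - i))"
    unfolding psum_def by (simp add: sum.distrib)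
  also have "\<dots> = (\<Sum>i<N. C)" by (rule sum.cong) (use assms in auto)
  finally show ?thesis by simp
qed

lemma conv:
  assumes "inXQ G x" "inXQ G y" "psum (dimN G) x = psum (dimN G) y"
    "\<forall>p \<le> dimN G. psum p x \<le> psum p y"
  shows "coroot_le G x y"
proof -
  define N where "N = dimN G"
  define D where "D p = psum p y - psum p x" for p
  have D0: "D 0 = 0" unfolding D_def psum_def by simp
  have DN: "D N = 0" unfolding D_def N_def using assms(3) by simp
  have Dpos: "0 \<le> D p" if "p \<le> N" for p unfolding D_def using assms(4) that N_def by auto
  have Dd: "D (Suc k) - D k = y k - x k" for k unfolding D_def psum_Suc by simp
  show ?thesis
  proof (cases G)
    case (GL n)
    have crGL: "coroot G i j k = ev i k - ev j k" for i j k by (simp add: coroot_def GL)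
    define c where "c i j = (if j = Suc i \<and> Suc i < N then D (Suc i) else 0)" for i j
    show ?thesis unfolding coroot_le_def
    proof (intro exI[of _ c] conjI allI impI)
      fix i j show "0 \<le> c i j" unfolding c_def using Dpos by simp
    next
      fix k assume k: "k < dimN G"
      have "(\<Sum>i<dimN G. \<Sum>j<dimN G. if i < j then c i j * coroot G i j k else 0)
          = (\<Sum>i<N. D (Suc i) * (ev i k - ev (Suc i) k))"
      proof (rule sum.cong)
        fix i assume i: "i \<in> {..<N}"
        have "(\<Sum>j<N. if i < j then c i j * coroot G i j k else 0)
            = (if Suc i < N \<and> Suc i < N then D (Suc i) * (ev i k - ev (Suc i) k) else 0)"
          unfolding c_def crGL using inner_sum[of i N "\<lambda>i. Suc i < N" "\<lambda>i. D (Suc i)" "\<lambda>j. ev i k - ev j k"] i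
          by simp
        also have "\<dots> = D (Suc i) * (ev i k - ev (Suc i) k)"
        proof (cases "Suc i < N")
          case False then have e: "Suc i = N" using i by (simp only: lessThan_iff)
          then have "D (Suc i) = 0" using DN by metis
          then show ?thesis using False by (simp only: if_False conj_absorb mult_zero_left)
        next
          case True then show ?thesis by (simp only: if_True conj_absorb)
        qed
        finally show "(\<Sum>j<dimN G. if i < j then c i j * coroot G i j k else 0) = D (Suc i) * (ev i k - ev (Suc i) k)"
          unfolding N_def .
      qed (simp add: N_def)
      also have "\<dots> = y k - x k" using tele[of k N D] k D0 Dd N_def by simp
      finally show "y k - x k = (\<Sum>i<dimN G. \<Sum>j<dimN G. if i < j then c i j * coroot G i j k else 0)" by simp
    qed
  next
    case (GSp n)
    have NN: "N = 2 * n" unfolding N_def GSp by simp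
    define c where "c i j = (if j = Suc i \<and> i < n then D (Suc i) else 0)" for i j
    define R where "R k = (\<Sum>i<N. \<Sum>j<N. if i < j then c i j * coroot G i j k else 0)" for k
    have isG: "is_GSp G" using GSp by simp
    have xs: "\<forall>i<N. x i + x (N - 1 - i) = x 0 + x (N - 1)" using assms(1) isG unfolding inXQ_def N_def by blast
    have ys: "\<forall>i<N. y i + y (N - 1 - i) = y 0 + y (N - 1)" using assms(2) isG unfolding inXQ_def N_def by blast
    have t: "psum N x = psum N y" using assms(3) unfolding N_def .
    have "of_nat N * (x 0 + x (N - 1)) = of_nat N * (y 0 + y (N - 1))"
      using sym_sum[OF xs] sym_sum[OF ys] t by metis
    then have CC: "N > 0 \<Longrightarrow> x 0 + x (N - 1) = y 0 + y (N - 1)" by simp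
    have danti: "y (N - 1 - k) - x (N - 1 - k) = - (y k - x k)" if "k < N" for k
    proof -
      have "x k + x (N - 1 - k) = x 0 + x (N - 1)" using xs that by blast
      moreover have "y k + y (N - 1 - k) = y 0 + y (N - 1)" using ys that by blast
      moreover have "x 0 + x (N - 1) = y 0 + y (N - 1)" using CC that by simp
      ultimately show ?thesis by linarith
    qed
    have Ranti: "R (N - 1 - k) = - R k" if "k < N" for k
    proof -
      have ca: "coroot G i j (N - Suc k) = - coroot G i j k" if "i < j" "j < N" for i j
        using cr_anti[OF isG, of i j k] N_def that \<open>k < N\<close> by simp
      show ?thesis unfolding R_def sum_negf[symmetric]
        by (intro sum.cong refl) (auto simp: ca)
    qed
    have low: "y k - x k = R k" if k: "k < n" for k
    proof -
      have "R k = (\<Sum>i<N. if i < n then D (Suc i) * (ev i k - ev (Suc i) k) else 0)"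
        unfolding R_def
      proof (rule sum.cong)
        fix i assume i: "i \<in> {..<N}"
        have "(\<Sum>j<N. if i < j then c i j * coroot G i j k else 0)
            = (if Suc i < N \<and> i < n then D (Suc i) * coroot G i (Suc i) k else 0)"
          unfolding c_def using inner_sum[of i N "\<lambda>i. i < n" "\<lambda>i. D (Suc i)" "\<lambda>j. coroot G i j k"] i
          by simp
        also have "\<dots> = (if i < n then D (Suc i) * (ev i k - ev (Suc i) k) else 0)"
          using k NN unfolding coroot_def ev_def N_def by (auto simp: GSp)
        finally show "(\<Sum>j<N. if i < j then c i j * coroot G i j k else 0) = (if i < n then D (Suc i) * (ev i k - ev (Suc i) k) else 0)" .
      qed simp
      also have "\<dots> = (\<Sum>i<n. D (Suc i) * (ev i k - ev (Suc i) k))"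
      proof -
        have st: "{x. x < 2 * n \<and> x < n} = {x. x < n}" by auto
        show ?thesis using NN by (simp add: sum.If_cases lessThan_def Collect_conj_eq[symmetric] st)
      qed
      also have "\<dots> = y k - x k" using tele[of k n D] k D0 Dd by simp
      finally show ?thesis by simp
    qed
    show ?thesis unfolding coroot_le_def
    proof (intro exI[of _ c] conjI allI impI)
      fix i j show "0 \<le> c i j" unfolding c_def using Dpos NN by auto
    next
      fix k assume k: "k < dimN G"
      show "y k - x k = (\<Sum>i<dimN G. \<Sum>j<dimN G. if i < j then c i j * coroot G i j k else 0)"
      proof (cases "k < n")
        case True then show ?thesis using low R_def N_def by simp
      next
        case False
        have k': "N - 1 - k < n" using False k NN N_def by simp
        have "y k - x k = - (y (N - 1 - k) - x (N - 1 - k))" using danti k N_def by simp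
        also have "\<dots> = - R (N - 1 - k)" using low[OF k'] by simp
        also have "\<dots> = R k" using Ranti k N_def by simp
        finally show ?thesis using R_def N_def by simp
      qed
    qed
  qed
qed




definition sb :: "nat list \<Rightarrow> nat \<Rightarrow> nat" where
  "sb ms k = sum_list (take k ms)"

lemma sb_Suc: "sb ms (Suc k) = sb ms k + (if k < length ms then ms ! k else 0)"
  unfolding sb_def by (simp add: take_Suc_conv_app_nth)

lemma sb_mono: "k \<le> k' \<Longrightarrow> sb ms k \<le> sb ms k'"
proof (induction k' rule: dec_induct)
  case (step n) then show ?case using sb_Suc[of ms n] by simp
qed simp

lemma sb_len: "sb ms (length ms) = sum_list ms" unfolding sb_def by simp

lemma sum_blocks: "m \<le> length ms \<Longrightarrow>
  (\<Sum>i<sb ms m. f i) = (\<Sum>k<m. \<Sum>i\<in>{sb ms k..<sb ms (Suc k)}. f i)"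
proof (induction m)
  case 0 then show ?case by (simp add: sb_def)
next
  case (Suc m)
  have "(\<Sum>i<sb ms (Suc m). f i) = (\<Sum>i\<in>{0..<sb ms m}. f i) + (\<Sum>i\<in>{sb ms m..<sb ms (Suc m)}. f i)"
    using sb_mono[of m "Suc m" ms] by (simp add: sum.atLeastLessThan_concat lessThan_atLeast0)
  then show ?case using Suc by (simp add: lessThan_atLeast0)
qed

lemma blk_unique: assumes "sb ms k \<le> i" "i < sb ms (Suc k)" "sb ms k' \<le> i" "i < sb ms (Suc k')"
  shows "k = k'"
proof (rule ccontr)
  assume "k \<noteq> k'"
  then consider "Suc k \<le> k'" | "Suc k' \<le> k" by linarith
  then show False
  proof cases
    case 1 then show False using sb_mono[OF 1, of ms] assms by linarith
  next
    case 2 then show False using sb_mono[OF 2, of ms] assms by linarith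
  qed
qed

lemma sb_rev: assumes "rev ms = ms" "k \<le> length ms"
  shows "sb ms k + sb ms (length ms - k) = sum_list ms"
proof -
  have "sb ms (length ms - k) = sum_list (take (length ms - k) (rev ms))" using assms(1) unfolding sb_def by simp
  also have "\<dots> = sum_list (drop k ms)" using assms(2) by (simp add: take_rev sum_list_rev)
  finally show ?thesis unfolding sb_def by (metis append_take_drop_id sum_list_append)
qed

lemma blk_mirror: assumes "rev ms = ms" "k < length ms" "sb ms k \<le> i" "i < sb ms (Suc k)"
  shows "sb ms (length ms - 1 - k) \<le> sum_list ms - 1 - i \<and> sum_list ms - 1 - i < sb ms (Suc (length ms - 1 - k))"
proof -
  have a: "sb ms k + sb ms (length ms - k) = sum_list ms" using sb_rev assms by simp
  have b: "sb ms (Suc k) + sb ms (length ms - Suc k) = sum_list ms" using sb_rev assms by simp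
  have c: "Suc (length ms - Suc k) = length ms - k" using assms(2) by simp
  have d: "length ms - 1 - k = length ms - Suc k" by simp
  show ?thesis unfolding d c using a b assms(3,4) by linarith
qed

lemma blk_exists: assumes "i < sum_list ms"
  shows "\<exists>k<length ms. sb ms k \<le> i \<and> i < sb ms (Suc k)"
proof -
  have "\<forall>m. m \<le> length ms \<longrightarrow> i < sb ms m \<longrightarrow> (\<exists>k<m. sb ms k \<le> i \<and> i < sb ms (Suc k))"
  proof (intro allI)
    fix m show "m \<le> length ms \<longrightarrow> i < sb ms m \<longrightarrow> (\<exists>k<m. sb ms k \<le> i \<and> i < sb ms (Suc k))"
    proof (induction m)
      case 0 then show ?case by (simp add: sb_def)
    next
      case (Suc m)
      show ?case
      proof (intro impI)
        assume h: "Suc m \<le> length ms" "i < sb ms (Suc m)"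
        show "\<exists>k<Suc m. sb ms k \<le> i \<and> i < sb ms (Suc k)"
        proof (cases "i < sb ms m")
          case True then show ?thesis using Suc h by (meson Suc_leD less_SucI)
        next
          case False then show ?thesis using h by (intro exI[of _ m]) auto
        qed
      qed
    qed
  qed
  then show ?thesis using assms sb_len[of ms] by auto
qed




lemma blockF:
  assumes "finite B" "\<forall>i\<in>B. \<forall>j\<in>B. nu i = nu j" "\<forall>i\<in>B. \<forall>j\<in>B. nut i - nut j \<le> (1::rat)"
    "(\<Sum>i\<in>B. nut i) = (\<Sum>i\<in>B. nu i)"
  shows "(\<Sum>i\<in>B. max (nu i - a) 0) \<le> (\<Sum>i\<in>B. max (nut i - a) 0)"
    and "(\<forall>i\<in>B. nut i \<in> \<int>) \<Longrightarrow> a \<in> \<int> \<Longrightarrow> (\<Sum>i\<in>B. max (nu i - a) 0) = (\<Sum>i\<in>B. max (nut i - a) 0)"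
proof -
  have sgn: "(\<forall>i\<in>B. 0 \<le> nu i - a) \<or> (\<forall>i\<in>B. nu i - a \<le> 0)"
  proof (cases "B = {}")
    case False
    then obtain i0 where i0: "i0 \<in> B" by blast
    show ?thesis
    proof (cases "a \<le> nu i0")
      case True
      have "0 \<le> nu i - a" if "i \<in> B" for i
      proof -
        have "nu i = nu i0" using assms(2) i0 that by blast
        then show ?thesis using True by simp
      qed
      then show ?thesis by blast
    next
      case False
      have "nu i - a \<le> 0" if "i \<in> B" for i
      proof -
        have "nu i = nu i0" using assms(2) i0 that by blast
        then show ?thesis using False by simp
      qed
      then show ?thesis by blast
    qed
  qed simp
  have e1: "(\<Sum>i\<in>B. max (nu i - a) 0) = max (\<Sum>i\<in>B. nu i - a) 0"
    using pos_sum_eq[OF sgn] by simp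
  have e2: "(\<Sum>i\<in>B. nu i - a) = (\<Sum>i\<in>B. nut i - a)"
    using assms(4) by (simp add: sum_subtractf)
  show "(\<Sum>i\<in>B. max (nu i - a) 0) \<le> (\<Sum>i\<in>B. max (nut i - a) 0)"
    unfolding e1 e2 using pos_sum[OF assms(1)] by simp
  assume ints: "\<forall>i\<in>B. nut i \<in> \<int>" and a: "a \<in> \<int>"
  have sgn2: "(\<forall>i\<in>B. 0 \<le> nut i - a) \<or> (\<forall>i\<in>B. nut i - a \<le> 0)"
  proof (cases "\<forall>i\<in>B. a \<le> nut i")
    case True then show ?thesis by auto
  next
    case False
    then obtain i0 where i0: "i0 \<in> B" "nut i0 < a" by force
    have "nut i0 + 1 \<le> a" using ints_step[of "nut i0" a] ints i0 a by blast
    then have "\<forall>i\<in>B. nut i - a \<le> 0"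
    proof (intro ballI)
      fix i assume "nut i0 + 1 \<le> a" "i \<in> B"
      moreover have "nut i - nut i0 \<le> 1" using assms(3) i0(1) \<open>i \<in> B\<close> by blast
      ultimately show "nut i - a \<le> 0" by linarith
    qed
    then show ?thesis by blast
  qed
  show "(\<Sum>i\<in>B. max (nu i - a) 0) = (\<Sum>i\<in>B. max (nut i - a) 0)"
    unfolding e1 e2 using pos_sum_eq[OF sgn2] by simp
qed

lemma span_sum_zero:
  assumes "\<forall>t<N. d t = (\<Sum>p<N. \<Sum>q<N. if P p q then c p q * coroot G p q t else (0::rat))"
    "K \<subseteq> {..<N}" "\<And>p q. P p q \<Longrightarrow> (\<Sum>t\<in>K. coroot G p q t) = 0"
  shows "(\<Sum>t\<in>K. d t) = 0"
proof -
  have "(\<Sum>t\<in>K. d t) = (\<Sum>t\<in>K. \<Sum>p<N. \<Sum>q<N. if P p q then c p q * coroot G p q t else 0)"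
    by (rule sum.cong) (use assms(1,2) in auto)
  also have "\<dots> = (\<Sum>p<N. \<Sum>q<N. \<Sum>t\<in>K. if P p q then c p q * coroot G p q t else 0)"
    by (rule swap3)
  also have "\<dots> = (\<Sum>p<N. \<Sum>q<N. if P p q then c p q * (\<Sum>t\<in>K. coroot G p q t) else 0)"
    by (intro sum.cong refl, rename_tac p q, case_tac "P p q") (simp_all add: sum_distrib_left)
  also have "\<dots> = 0" by (intro sum.neutral ballI) (simp add: assms(3))
  finally show ?thesis .
qed

lemma root_block_sum:
  assumes "std_levi G ms" "root_of_M G ms p q" "k < length ms"
  shows "(\<Sum>t\<in>{sb ms k..<sb ms (Suc k)}. coroot G p q t) = 0"
proof -
  define N where "N = dimN G"
  define L where "L = length ms"
  define B where "B = {sb ms k..<sb ms (Suc k)}"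
  have sl: "sum_list ms = N" using assms(1) unfolding std_levi_def N_def by simp
  obtain m where m: "m < L" "sb ms m \<le> p" "p < sb ms (Suc m)" "sb ms m \<le> q" "q < sb ms (Suc m)"
    using assms(2) unfolding root_of_M_def same_block_def sb_def L_def by blast
  have pq: "p < N" "q < N" using assms(2) unfolding root_of_M_def N_def by auto
  have mem1: "p \<in> B \<longleftrightarrow> q \<in> B"
  proof
    assume "p \<in> B" then have "k = m" using blk_unique[of ms k p m] m unfolding B_def by simp
    then show "q \<in> B" using m unfolding B_def by auto
  next
    assume "q \<in> B" then have "k = m" using blk_unique[of ms k q m] m unfolding B_def by simp
    then show "p \<in> B" using m unfolding B_def by auto
  qed
  have mem2: "N - 1 - p \<in> B \<longleftrightarrow> N - 1 - q \<in> B" if G: "is_GSp G"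
  proof -
    have rv: "rev ms = ms" using assms(1) G unfolding std_levi_def by simp
    have a: "sb ms (L - 1 - m) \<le> N - 1 - p \<and> N - 1 - p < sb ms (Suc (L - 1 - m))"
      using blk_mirror[OF rv, of m p] m sl unfolding L_def by simp
    have b: "sb ms (L - 1 - m) \<le> N - 1 - q \<and> N - 1 - q < sb ms (Suc (L - 1 - m))"
      using blk_mirror[OF rv, of m q] m sl unfolding L_def by simp
    show ?thesis
    proof
      assume "N - 1 - p \<in> B" then have "k = L - 1 - m" using blk_unique[of ms k "N - 1 - p" "L - 1 - m"] a unfolding B_def by simp
      then show "N - 1 - q \<in> B" using b unfolding B_def by auto
    next
      assume "N - 1 - q \<in> B" then have "k = L - 1 - m" using blk_unique[of ms k "N - 1 - q" "L - 1 - m"] b unfolding B_def by simp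
      then show "N - 1 - p \<in> B" using a unfolding B_def by auto
    qed
  qed
  have "(\<Sum>t\<in>B. coroot G p q t) = 0"
  proof (cases "is_GSp G")
    case False then show ?thesis unfolding cr_sum sum_ev using mem1 unfolding B_def by simp
  next
    case True
    have "(\<Sum>t\<in>B. ev (N - 1 - q) t) = (\<Sum>t\<in>B. ev (N - 1 - p) t)"
      unfolding sum_ev using mem2[OF True] by simp
    moreover have "(\<Sum>t\<in>B. ev q t) = (\<Sum>t\<in>B. ev p t)"
      unfolding sum_ev using mem1 by simp
    ultimately show ?thesis unfolding cr_sum N_def by simp
  qed
  then show ?thesis unfolding B_def .
qed




lemma inblock_root:
  assumes "k < length ms" "sum_list ms = dimN G" "i \<in> {sb ms k..<sb ms (Suc k)}" "j \<in> {sb ms k..<sb ms (Suc k)}" "i \<noteq> j"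
  shows "root_of_M G ms i j"
proof -
  have "sb ms (Suc k) \<le> sb ms (length ms)" using sb_mono assms(1) by simp
  then have lt: "sb ms (Suc k) \<le> dimN G" using sb_len assms(2) by simp
  show ?thesis unfolding root_of_M_def same_block_def
    using assms lt unfolding sb_def by auto
qed

theorem proposition4p8:
  fixes G :: grp and ms :: "nat list" and nu :: "nat \<Rightarrow> rat"
  assumes "valid_grp G"
    and "std_levi G ms"
    and "inXMQ G ms nu" and "dominant G nu"
    and "kappa_integral G ms nu"
    and "inX G nut" and "M_dominant G ms nut" and "M_minuscule G ms nut"
    and "kappa_eq G ms nut nu"
    and "in_W_orbit G lam nut" and "dominant G lam"
    and "inX G mu" and "dominant G mu"
    and "coroot_le G nu mu"
  shows "coroot_le G nu lam \<and> coroot_le G lam mu"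
proof -
  define N where "N = dimN G"
  define L where "L = length ms"
  have sl: "sum_list ms = N" using assms(2) unfolding std_levi_def N_def by simp
  have sbL: "sb ms L = N" using sl sb_len unfolding L_def by simp
  have domnu: "\<forall>i j. i < j \<and> j < N \<longrightarrow> nu j \<le> nu i" using assms(4) unfolding dominant_def N_def .
  have domlam: "\<forall>i j. i < j \<and> j < N \<longrightarrow> lam j \<le> lam i" using assms(11) unfolding dominant_def N_def .
  have dommu: "\<forall>i j. i < j \<and> j < N \<longrightarrow> mu j \<le> mu i" using assms(13) unfolding dominant_def N_def .
  obtain s where s: "s \<in> weyl G" "\<forall>k<N. lam k = nut (s k)"
    using assms(10) unfolding in_W_orbit_def N_def by blast
  have bij: "bij_betw s {..<N} {..<N}" using s(1) unfolding weyl_def N_def by simp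
  have sN: "s i < N" if "i < N" for i using bij_betw_apply[OF bij] that by simp
  have permF: "Fa N a lam = Fa N a nut" for a
  proof -
    have "Fa N a lam = (\<Sum>k<N. max (nut (s k) - a) 0)" unfolding Fa_def
      by (rule sum.cong) (use s(2) in auto)
    also have "\<dots> = Fa N a nut" unfolding Fa_def
      by (rule sum.reindex_bij_betw[OF bij, of "\<lambda>k. max (nut k - a) 0"])
    finally show ?thesis .
  qed
  have permT: "psum N lam = psum N nut"
  proof -
    have "psum N lam = (\<Sum>k<N. nut (s k))" unfolding psum_def
      by (rule sum.cong) (use s(2) in auto)
    also have "\<dots> = psum N nut" unfolding psum_def
      by (rule sum.reindex_bij_betw[OF bij])
    finally show ?thesis .
  qed
  obtain c where c: "\<forall>t<N. nut t - nu t = (\<Sum>p<N. \<Sum>q<N. if root_of_M G ms p q then c p q * coroot G p q t else 0)"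
    using assms(9) unfolding kappa_eq_def in_coroot_span_M_def N_def by blast
  have totK: "psum N nut = psum N nu"
  proof -
    have "(\<Sum>t\<in>{..<N}. nut t - nu t) = 0"
    proof (rule span_sum_zero[OF c])
      fix p q assume "root_of_M G ms p q"
      then show "(\<Sum>t\<in>{..<N}. coroot G p q t) = 0" unfolding root_of_M_def N_def using cr_total by blast
    qed simp
    then show ?thesis unfolding psum_def by (simp add: sum_subtractf)
  qed
  have totM: "psum N nu = psum N mu" using coroot_le_total[OF assms(14)] N_def by simp
  have ints_nut: "nut i \<in> \<int>" if "i < N" for i using assms(6) that unfolding inX_def N_def by blast
  have ints_mu: "mu i \<in> \<int>" if "i < N" for i using assms(12) that unfolding inX_def N_def by blast
  have blk: "(\<Sum>i\<in>{sb ms k..<sb ms (Suc k)}. max (nu i - a) 0) \<le> (\<Sum>i\<in>{sb ms k..<sb ms (Suc k)}. max (nut i - a) 0)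
      \<and> (a \<in> \<int> \<longrightarrow> (\<Sum>i\<in>{sb ms k..<sb ms (Suc k)}. max (nu i - a) 0) = (\<Sum>i\<in>{sb ms k..<sb ms (Suc k)}. max (nut i - a) 0))"
    if k: "k < L" for k a
  proof -
    define B where "B = {sb ms k..<sb ms (Suc k)}"
    have BN: "B \<subseteq> {..<N}"
    proof -
      have "sb ms (Suc k) \<le> sb ms L" using sb_mono k by simp
      then show ?thesis unfolding B_def using sbL by auto
    qed
    have root: "root_of_M G ms i j" if "i \<in> B" "j \<in> B" "i \<noteq> j" for i j
      using inblock_root[of k ms G i j] k sl that unfolding L_def B_def N_def by simp
    have h1: "\<forall>i\<in>B. \<forall>j\<in>B. nu i = nu j"
    proof (intro ballI)
      fix i j assume ij: "i \<in> B" "j \<in> B"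
      show "nu i = nu j"
      proof (cases "i = j")
        case False
        then have "nu i - nu j = 0" using root[OF ij False] assms(3) unfolding inXMQ_def by blast
        then show ?thesis by simp
      qed simp
    qed
    have h2: "\<forall>i\<in>B. \<forall>j\<in>B. nut i - nut j \<le> 1"
    proof (intro ballI)
      fix i j assume ij: "i \<in> B" "j \<in> B"
      show "nut i - nut j \<le> 1"
      proof (cases "i = j")
        case False
        then have "nut i - nut j \<in> {-1, 0, 1}" using root[OF ij False] assms(8) unfolding M_minuscule_def by blast
        then show ?thesis by auto
      qed simp
    qed
    have h3: "(\<Sum>i\<in>B. nut i) = (\<Sum>i\<in>B. nu i)"
    proof -
      have "(\<Sum>t\<in>B. nut t - nu t) = 0"
      proof (rule span_sum_zero[OF c BN])
        fix p q assume "root_of_M G ms p q"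
        then show "(\<Sum>t\<in>B. coroot G p q t) = 0"
          using root_block_sum[OF assms(2)] k unfolding B_def L_def by blast
      qed
      then show ?thesis by (simp add: sum_subtractf)
    qed
    have h4: "\<forall>i\<in>B. nut i \<in> \<int>" using BN ints_nut by blast
    have fin: "finite B" unfolding B_def by simp
    have r1: "(\<Sum>i\<in>B. max (nu i - a) 0) \<le> (\<Sum>i\<in>B. max (nut i - a) 0)"
      by (rule blockF(1)[OF fin h1 h2 h3])
    have r2: "a \<in> \<int> \<longrightarrow> (\<Sum>i\<in>B. max (nu i - a) 0) = (\<Sum>i\<in>B. max (nut i - a) 0)"
      using blockF(2)[OF fin h1 h2 h3 h4] by blast
    show ?thesis using r1 r2 unfolding B_def by blast
  qed
  have Fsplit: "Fa N a x = (\<Sum>k<L. \<Sum>i\<in>{sb ms k..<sb ms (Suc k)}. max (x i - a) 0)" for a x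
    unfolding Fa_def using sum_blocks[of L ms "\<lambda>i. max (x i - a) 0"] sbL L_def by simp
  have Fle: "Fa N a nu \<le> Fa N a nut" for a
    unfolding Fsplit
  proof (rule sum_mono)
    fix k assume "k \<in> {..<L}"
    then show "(\<Sum>i\<in>{sb ms k..<sb ms (Suc k)}. max (nu i - a) 0) \<le> (\<Sum>i\<in>{sb ms k..<sb ms (Suc k)}. max (nut i - a) 0)"
      using blk[of k a] by simp
  qed
  have Feq: "Fa N a nu = Fa N a nut" if "a \<in> \<int>" for a
    unfolding Fsplit
  proof (rule sum.cong)
    fix k assume "k \<in> {..<L}"
    then show "(\<Sum>i\<in>{sb ms k..<sb ms (Suc k)}. max (nu i - a) 0) = (\<Sum>i\<in>{sb ms k..<sb ms (Suc k)}. max (nut i - a) 0)"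
      using blk[of k a] that by simp
  qed simp
  have pre1: "psum p nu \<le> psum p lam" if "p \<le> N" for p
  proof (cases "p = 0")
    case True then show ?thesis unfolding psum_def by simp
  next
    case False
    define b where "b = lam (p - 1)"
    have "psum p nu \<le> of_nat p * b + Fa N b nu" using L1 that by blast
    also have "\<dots> \<le> of_nat p * b + Fa N b lam" using Fle permF by simp
    also have "Fa N b lam = psum p lam - of_nat p * b" unfolding b_def
      using L2p[OF domlam] False that by simp
    finally show ?thesis by simp
  qed
  have pre2: "psum p lam \<le> psum p mu" if "p \<le> N" for p
  proof (cases "p = 0")
    case True then show ?thesis unfolding psum_def by simp
  next
    case False
    define a where "a = mu (p - 1)"
    have aZ: "a \<in> \<int>" unfolding a_def using ints_mu False that by simp
    obtain q where q: "q \<le> N" "Fa N a nu = psum q nu - of_nat q * a" using L2d[OF domnu] by blast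
    have "psum p lam \<le> of_nat p * a + Fa N a lam" using L1 that by blast
    also have "Fa N a lam = Fa N a nu" using permF Feq[OF aZ] by simp
    also have "\<dots> = psum q nu - of_nat q * a" by (rule q(2))
    also have "psum q nu \<le> psum q mu" using coroot_le_prefix[OF assms(14)] q(1) N_def by simp
    also have "psum q mu \<le> of_nat q * a + Fa N a mu" using L1 q(1) by blast
    also have "Fa N a mu = psum p mu - of_nat p * a" unfolding a_def
      using L2p[OF dommu] False that by simp
    finally show ?thesis by simp
  qed
  have xq_nu: "inXQ G nu" using assms(3) unfolding inXMQ_def by simp
  have xq_mu: "inXQ G mu" using assms(12) unfolding inX_def by simp
  have xq_lam: "inXQ G lam" unfolding inXQ_def
  proof (intro impI)
    assume G: "is_GSp G"
    have sflip: "s (N - 1 - i) = N - 1 - s i" if "i < N" for i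
      using s(1) G that unfolding weyl_def N_def by blast
    have nq: "nut i + nut (N - 1 - i) = nut 0 + nut (N - 1)" if "i < N" for i
      using assms(6) G that unfolding inX_def inXQ_def N_def by blast
    have C: "lam i + lam (N - 1 - i) = nut 0 + nut (N - 1)" if "i < N" for i
    proof -
      have "lam i + lam (N - 1 - i) = nut (s i) + nut (s (N - 1 - i))" using s(2) that by simp
      also have "\<dots> = nut (s i) + nut (N - 1 - s i)" using sflip that by simp
      also have "\<dots> = nut 0 + nut (N - 1)" using nq sN that by blast
      finally show ?thesis .
    qed
    show "\<forall>i<dimN G. lam i + lam (dimN G - 1 - i) = lam 0 + lam (dimN G - 1)"
    proof (intro allI impI)
      fix i assume i: "i < dimN G"
      then have "0 < N" unfolding N_def by simp
      then have "lam 0 + lam (N - 1 - 0) = nut 0 + nut (N - 1)" using C by blast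
      then show "lam i + lam (dimN G - 1 - i) = lam 0 + lam (dimN G - 1)" using C i unfolding N_def by simp
    qed
  qed
  have r1: "coroot_le G nu lam"
  proof (rule conv[OF xq_nu xq_lam])
    show "psum (dimN G) nu = psum (dimN G) lam" using totK permT unfolding N_def by simp
    show "\<forall>p\<le>dimN G. psum p nu \<le> psum p lam" using pre1 unfolding N_def by blast
  qed
  have r2: "coroot_le G lam mu"
  proof (rule conv[OF xq_lam xq_mu])
    show "psum (dimN G) lam = psum (dimN G) mu" using totK totM permT unfolding N_def by simp
    show "\<forall>p\<le>dimN G. psum p lam \<le> psum p mu" using pre2 unfolding N_def by blast
  qed
  show ?thesis using r1 r2 by simp
qed


end
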